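(* Let $q=p^m$ be a prime power and let $J_{\mathbb{F}_q}$ be the group of unitaries on $\mathbb{C}^q$ generated by $F$, $P_\gamma$ and $M_\gamma$ for all $\gamma\in\mathbb{F}_q\setminus\{0\}$. Then $J_{\mathbb{F}_q}$ acts by conjugation transitively on the non-trivial elements of $\mathcal{G}_1/\langle\omega I\rangle$: for any $(\alpha,\beta),(\alpha',\beta')\in\mathbb{F}_q^2\setminus\{(0,0)\}$ there is $U\in J_{\mathbb{F}_q}$ such that $U^{-1}X_\alpha Z_\beta U$ is a scalar multiple of $X_{\alpha'}Z_{\beta'}$.
   Context: Let $\omega=\exp(2\pi i/p)$ and $\mathrm{tr}(\alpha)=\sum_{k=0}^{m-1}\alpha^{p^k}\in\mathbb{F}_p$ (identified with $\mathbb{Z}/p\mathbb{Z}$ in exponents of $\omega$). On $\mathbb{C}^q$ with orthonormal basis $\{|x\rangle:x\in\mathbb{F}_q\}$ define $X_\alpha=\sum_x|x+\alpha\rangle\langle x|$, $Z_\beta=\sum_z\omega^{\mathrm{tr}(\beta z)}|z\rangle\langle z|$, $M_\gamma=\sum_y|\gamma y\rangle\langle y|$ ($\gamma\neq0$), $F=\frac1{\sqrt q}\sum_{x,z}\omega^{\mathrm{tr}(xz)}|z\rangle\langle x|$. The error group $\mathcal{G}_1$ is the group generated by all $X_\alpha Z_\beta$, with center $\langle\omega I\rangle$. For $q$ odd, $P_\gamma=\sum_y\omega^{-\mathrm{tr}(\frac12\gamma y^2)}|y\rangle\langle y|$. For $q=2^m$, fix a self-dual basis $\{b_1,\dots,b_m\}$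 of $\mathbb{F}_q$ over $\mathbb{F}_2$ ($\mathrm{tr}(b_ib_j)=\delta_{ij}$), let $\mathrm{wgt}(y)=|\{j:\mathrm{tr}(yb_j)\ne0\}|$, $P_1=\sum_y(-i)^{\mathrm{wgt}(y)}|y\rangle\langle y|$, and $P_\gamma=M_{\gamma_0}^{-1}P_1M_{\gamma_0}$ where $\gamma_0^2=\gamma$. *)

theory Defs
  imports "HOL-Analysis.Analysis"
begin

text \<open>Throughout, 'a is a finite field F_q with q = p^m, p prime.
  Operators on C^q are matrices complex^'a^'a; entry (r,c) is the
  coefficient of |r><c|.\<close>

definition ftr :: "nat \<Rightarrow> nat \<Rightarrow> 'a::{finite,field} \<Rightarrow> 'a::{finite,field}" where
  "ftr p m \<alpha> = (\<Sum>k<m. \<alpha> ^ (p ^ k))"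

definition trz :: "nat \<Rightarrow> nat \<Rightarrow> 'a::{finite,field} \<Rightarrow> int" where
  "trz p m \<alpha> = int (THE k. k < p \<and> of_nat k = ftr p m \<alpha>)"

definition omega_pow :: "nat \<Rightarrow> int \<Rightarrow> complex" where
  "omega_pow p k = exp (2 * pi * \<i> * of_int k / of_nat p)"

definition Xop :: "'a::{finite,field} \<Rightarrow> complex^'a::{finite,field}^'a::{finite,field}" where
  "Xop \<alpha> = (\<chi> r c. if r = c + \<alpha> then 1 else 0)"

definition Zop :: "nat \<Rightarrow> nat \<Rightarrow> 'a::{finite,field} \<Rightarrow> complex^'a::{finite,field}^'a::{finite,field}" where
  "Zop p m \<beta> = (\<chi> r c. if r = c then omega_pow p (trz p m (\<beta> * r)) else 0)"

definition Mop :: "'a::{finite,field} \<Rightarrow> complex^'a::{finite,field}^'a::{finite,field}" where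
  "Mop \<gamma> = (\<chi> r c. if r = \<gamma> * c then 1 else 0)"

definition Fop :: "nat \<Rightarrow> nat \<Rightarrow> complex^'a::{finite,field}^'a::{finite,field}" where
  "Fop p m = (\<chi> r c. omega_pow p (trz p m (c * r)) / complex_of_real (sqrt (real CARD('a::{finite,field}))))"

definition Pop_odd :: "nat \<Rightarrow> nat \<Rightarrow> 'a::{finite,field} \<Rightarrow> complex^'a::{finite,field}^'a::{finite,field}" where
  "Pop_odd p m \<gamma> = (\<chi> r c. if r = c then omega_pow p (- trz p m (\<gamma> * r ^ 2 / 2)) else 0)"

text \<open>For q = 2^m: weight w.r.t. the self-dual basis b_0,...,b_(m-1).\<close>
definition wgt :: "nat \<Rightarrow> nat \<Rightarrow> (nat \<Rightarrow> 'a::{finite,field}) \<Rightarrow> 'a::{finite,field} \<Rightarrow> nat" where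
  "wgt p m b y = card {j. j < m \<and> ftr p m (y * b j) \<noteq> 0}"

definition P1_even :: "nat \<Rightarrow> nat \<Rightarrow> (nat \<Rightarrow> 'a::{finite,field}) \<Rightarrow> complex^'a::{finite,field}^'a::{finite,field}" where
  "P1_even p m b = (\<chi> r c. if r = c then (- \<i>) ^ wgt p m b r else 0)"

definition Pop_even :: "nat \<Rightarrow> nat \<Rightarrow> (nat \<Rightarrow> 'a::{finite,field}) \<Rightarrow> 'a::{finite,field} \<Rightarrow> complex^'a::{finite,field}^'a::{finite,field}" where
  "Pop_even p m b \<gamma> =
     (let \<gamma>0 = (SOME g. g ^ 2 = \<gamma>) in matrix_inv (Mop \<gamma>0) ** P1_even p m b ** Mop \<gamma>0)"

definition Pop :: "nat \<Rightarrow> nat \<Rightarrow> (nat \<Rightarrow> 'a::{finite,field}) \<Rightarrow> 'a::{finite,field} \<Rightarrow> complex^'a::{finite,field}^'a::{finite,field}" where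
  "Pop p m b \<gamma> = (if p = 2 then Pop_even p m b \<gamma> else Pop_odd p m \<gamma>)"

definition self_dual_basis :: "nat \<Rightarrow> nat \<Rightarrow> (nat \<Rightarrow> 'a::{finite,field}) \<Rightarrow> bool" where
  "self_dual_basis p m b \<longleftrightarrow>
     (\<forall>i<m. \<forall>j<m. ftr p m (b i * b j) = (if i = j then 1 else 0))"

inductive_set Jgrp :: "nat \<Rightarrow> nat \<Rightarrow> (nat \<Rightarrow> 'a::{finite,field}) \<Rightarrow> (complex^'a::{finite,field}^'a::{finite,field}) set"
  for p m b where
  J_one: "mat 1 \<in> Jgrp p m b"
| J_F: "Fop p m \<in> Jgrp p m b"
| J_P: "\<gamma> \<noteq> 0 \<Longrightarrow> Pop p m b \<gamma> \<in> Jgrp p m b"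
| J_M: "\<gamma> \<noteq> 0 \<Longrightarrow> Mop \<gamma> \<in> Jgrp p m b"
| J_mult: "U \<in> Jgrp p m b \<Longrightarrow> V \<in> Jgrp p m b \<Longrightarrow> U ** V \<in> Jgrp p m b"
| J_inv: "U \<in> Jgrp p m b \<Longrightarrow> matrix_inv U \<in> Jgrp p m b"

end

theory Submission
  imports Defs "HOL-Computational_Algebra.Primes" "HOL-Computational_Algebra.Polynomial"
begin

locale ffc =
  fixes p m :: nat and b :: "nat \<Rightarrow> 'a::{finite,field}"
  assumes prime_p: "prime p" and card_a: "CARD('a) = p ^ m" and char_p: "of_nat p = (0::'a)"
begin

lemma p_gt1: "p > 1" using prime_p prime_gt_1_nat by blast

lemma CHAR_eq: "CHAR('a) = p"
proof -
  have "CHAR('a) dvd p" using char_p of_nat_eq_0_iff_char_dvd by blast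
  moreover have "CHAR('a) \<noteq> 1" by simp
  ultimately show ?thesis using prime_p by (meson prime_nat_iff)
qed

lemma prime_CHAR': "prime CHAR('a)" using CHAR_eq prime_p by simp

lemma of_nat_mod: "(of_nat k :: 'a) = of_nat (k mod p)"
proof -
  have "(of_nat k :: 'a) = of_nat (p * (k div p) + k mod p)" by simp
  also have "\<dots> = of_nat (k mod p)" by (simp only: of_nat_add of_nat_mult char_p) simp
  finally show ?thesis .
qed

lemma of_nat_inj: "i < p \<Longrightarrow> j < p \<Longrightarrow> (of_nat i :: 'a) = of_nat j \<Longrightarrow> i = j"
proof -
  assume ij: "i < p" "j < p" "(of_nat i :: 'a) = of_nat j"
  { fix i j :: nat assume "i < j" "j < p" "(of_nat i :: 'a) = of_nat j"
    then have "CHAR('a) dvd j - i" using of_nat_eq_iff_char_dvd by blast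
    then have "p dvd j - i" using CHAR_eq by simp
    moreover have "0 < j - i" "j - i < p" using \<open>i<j\<close> \<open>j<p\<close> by auto
    ultimately have False using nat_dvd_not_less by blast }
  then show "i = j" using ij by (metis linorder_neqE_nat)
qed

lemma of_nat_eq_mod: "(of_nat i :: 'a) = of_nat j \<Longrightarrow> i mod p = j mod p"
  using of_nat_inj[of "i mod p" "j mod p"] of_nat_mod[of i] of_nat_mod[of j] p_gt1 by auto

lemma frob_add: "(x + y :: 'a) ^ (p ^ k) = x ^ (p ^ k) + y ^ (p ^ k)"
  using freshmans_dream'[OF prime_CHAR'] CHAR_eq by simp

lemma frob_sum: "(sum f A :: 'a) ^ (p ^ k) = (\<Sum>i\<in>A. f i ^ (p ^ k))"
  by (rule freshmans_dream_sum'[OF prime_CHAR']) (simp add: CHAR_eq)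

lemma pow_card: "(x::'a) ^ CARD('a) = x"
proof (cases "x = 0")
  case False
  have "x * (\<Prod>y\<in>UNIV-{0}. x * y) = x * x ^ (card (UNIV :: 'a set) - 1) * \<Prod>(UNIV-{0})"
    by (simp add: prod.distrib mult_ac)
  also have "x * x ^ (card (UNIV :: 'a set) - 1) = x ^ Suc (card (UNIV :: 'a set) - 1)"
    by (subst power_Suc) auto
  also have "Suc (card (UNIV :: 'a set) - 1) = card (UNIV :: 'a set)"
    using finite_UNIV_card_ge_0[where ?'a = 'a] by simp
  also have "(\<Prod>y\<in>UNIV-{0}. x * y) = (\<Prod>y\<in>UNIV-{0}. y)"
    by (rule prod.reindex_bij_witness[of _ "\<lambda>y. y / x" "\<lambda>y. x * y"]) (use False in auto)
  finally show ?thesis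
    by simp
qed (use finite_UNIV_card_ge_0[where ?'a = 'a] in auto)

lemma m_pos: "m > 0"
proof (rule ccontr)
  assume "\<not> m > 0" then have "CARD('a) = 1" using card_a by simp
  then have "(0::'a) = 1" by (metis card_1_singletonE UNIV_I singletonD)
  then show False by simp
qed

lemma ftr_add: "ftr p m (x + y :: 'a) = ftr p m x + ftr p m y"
  unfolding ftr_def by (simp add: frob_add sum.distrib)

lemma ftr_zero: "ftr p m (0::'a) = 0"
  unfolding ftr_def using p_gt1 by (intro sum.neutral) simp

lemma ftr_sum: "finite A \<Longrightarrow> ftr p m (sum f A :: 'a) = (\<Sum>i\<in>A. ftr p m (f i))"
  by (induction A rule: finite_induct) (auto simp: ftr_add ftr_zero)

lemma ftr_pow: "ftr p m (x::'a) ^ p = ftr p m x"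
proof -
  have "ftr p m x ^ p = (\<Sum>k<m. (x ^ (p ^ k)) ^ (p ^ 1))"
    unfolding ftr_def using frob_sum[of _ _ 1] by simp
  also have "\<dots> = (\<Sum>k<m. x ^ (p ^ Suc k))"
    by (simp add: power_mult[symmetric] mult.commute)
  also have "\<dots> = (\<Sum>k<m. x ^ (p ^ k))"
  proof -
    have "(\<Sum>k<m. x ^ (p ^ Suc k)) + x ^ (p ^ 0) = (\<Sum>k<Suc m. x ^ (p ^ k))"
      by (subst sum.lessThan_Suc_shift) simp
    also have "\<dots> = (\<Sum>k<m. x ^ (p ^ k)) + x ^ (p ^ m)" by simp
    also have "x ^ (p ^ m) = x ^ (p ^ 0)" using pow_card card_a by simp
    finally show ?thesis by simp
  qed
  finally show ?thesis unfolding ftr_def .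
qed

lemma of_nat_pow_p: "(of_nat k :: 'a) ^ p = of_nat k"
proof (induction k)
  case 0 then show ?case using p_gt1 by simp
next
  case (Suc k)
  then show ?case using frob_add[of "of_nat k" 1 1] by (simp add: add.commute)
qed

lemma prime_field_elem:
  assumes "(y::'a) ^ p = y" shows "\<exists>k<p. of_nat k = y"
proof (rule ccontr)
  assume nk: "\<not> (\<exists>k<p. of_nat k = y)"
  define P :: "'a poly" where "P = monom 1 p - [:0, 1:]"
  have evP: "poly P z = z ^ p - z" for z by (simp add: P_def poly_monom)
  have "coeff [:0, 1::'a:] p = 0" using p_gt1 by (intro coeff_eq_0) simp
  then have "coeff P p = 1" by (simp add: P_def coeff_monom)
  then have Pnz: "P \<noteq> 0" by auto
  have dP: "degree P \<le> p" unfolding P_def using p_gt1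
    by (intro degree_diff_le) (auto simp: degree_monom_eq)
  have sub: "insert y ((of_nat :: nat \<Rightarrow> 'a) ` {..<p}) \<subseteq> {x. poly P x = 0}"
    using assms by (auto simp: evP of_nat_pow_p)
  have "inj_on (of_nat :: nat \<Rightarrow> 'a) {..<p}" by (auto intro!: inj_onI of_nat_inj)
  then have "card (insert y ((of_nat :: nat \<Rightarrow> 'a) ` {..<p})) = Suc p"
    using nk by (subst card_insert_disjoint) (auto simp: card_image)
  moreover have "card (insert y ((of_nat :: nat \<Rightarrow> 'a) ` {..<p})) \<le> card {x. poly P x = 0}"
    using sub poly_roots_finite[OF Pnz] by (rule card_mono[rotated])
  ultimately show False using card_poly_roots_bound[OF Pnz] dP by linarith
qed

definition tn :: "'a \<Rightarrow> nat" where "tn x = (THE k. k < p \<and> of_nat k = ftr p m x)"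

lemma tn: "tn x < p" "of_nat (tn x) = ftr p m x"
proof -
  obtain k where k: "k < p" "of_nat k = ftr p m x" using prime_field_elem[OF ftr_pow] by blast
  have "tn x = k" unfolding tn_def
    by (rule the_equality) (use k of_nat_inj in auto)
  then show "tn x < p" "of_nat (tn x) = ftr p m x" using k by auto
qed

lemma trz_tn: "trz p m x = int (tn x)"
  unfolding trz_def tn_def by simp

lemma ftr_nontriv: "\<exists>y::'a. ftr p m y \<noteq> 0"
proof (rule ccontr)
  assume "\<not> (\<exists>y::'a. ftr p m y \<noteq> 0)"
  then have all0: "ftr p m y = 0" for y :: 'a by blast
  define P :: "'a poly" where "P = (\<Sum>k<m. monom 1 (p ^ k))"
  have evP: "poly P z = ftr p m z" for z by (simp add: P_def poly_sum poly_monom ftr_def)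
  have inj: "p ^ k = p ^ (m - 1) \<longleftrightarrow> k = m - 1" for k using p_gt1 by (simp add: power_inject_exp)
  have "coeff P (p ^ (m - 1)) = (\<Sum>k<m. if k = m - 1 then 1 else 0)"
    unfolding P_def coeff_sum coeff_monom using p_gt1 by (intro sum.cong) (auto simp: power_inject_exp)
  also have "\<dots> = 1" using m_pos by simp
  finally have Pnz: "P \<noteq> 0" by auto
  have dP: "degree P \<le> p ^ (m - 1)" unfolding P_def
  proof (intro degree_sum_le)
    fix k assume "k \<in> {..<m}"
    then have "p ^ k \<le> p ^ (m - 1)" using p_gt1 by (intro power_increasing) auto
    then show "degree (monom (1::'a) (p ^ k)) \<le> p ^ (m - 1)" by (simp add: degree_monom_eq)
  qed simp
  have "{x. poly P x = 0} = UNIV" using all0 evP by auto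
  then have "CARD('a) \<le> p ^ (m - 1)" using card_poly_roots_bound[OF Pnz] dP by simp
  moreover have "p ^ (m - 1) < p ^ m" using p_gt1 m_pos by (intro power_strict_increasing) auto
  ultimately show False using card_a by simp
qed

end

lemma omega_add: "omega_pow p (a + b) = omega_pow p a * omega_pow p b"
  unfolding omega_pow_def by (simp add: exp_add[symmetric] add_divide_distrib ring_distribs)

lemma omega_zero: "omega_pow p 0 = 1" unfolding omega_pow_def by simp

lemma omega_pmult: "p > 0 \<Longrightarrow> omega_pow p (int p * j) = 1"
  unfolding omega_pow_def by (simp add: exp_eq_1)

lemma omega_mod: "p > 0 \<Longrightarrow> a mod int p = b mod int p \<Longrightarrow> omega_pow p a = omega_pow p b"
proof -
  assume "p > 0" "a mod int p = b mod int p"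
  then have "int p dvd a - b" by (simp add: mod_eq_dvd_iff)
  then obtain j where "a = b + int p * j" by (metis add_diff_cancel_left' dvdE diff_add_cancel add.commute)
  then show ?thesis using omega_add omega_pmult[OF \<open>p>0\<close>] by simp
qed

lemma omega_nz: "omega_pow p k \<noteq> 0" unfolding omega_pow_def by simp

lemma omega_ne1: assumes "0 < k" "k < int p" shows "omega_pow p k \<noteq> 1"
proof
  assume "omega_pow p k = 1"
  then obtain n :: int where n: "2 * pi * of_int k / real p = of_int (2 * n) * pi"
    unfolding omega_pow_def exp_eq_1 by auto
  have "p > 0" using assms by simp
  then have "of_int k = real p * of_int n" using n pi_gt_zero by (simp add: field_simps)
  then have "k = int p * n" by (metis of_int_eq_iff of_int_mult of_int_of_nat_eq)
  show False
  proof (cases "n \<le> 0")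
    case True then have "int p * n \<le> 0" by (simp add: mult_nonneg_nonpos)
    then show False using assms \<open>k = int p * n\<close> by simp
  next
    case False then have "int p * 1 \<le> int p * n" by (intro mult_left_mono) auto
    then show False using assms \<open>k = int p * n\<close> by linarith
  qed
qed

lemma omega2: "omega_pow 2 (int k) = (-1) ^ k"
proof -
  have "omega_pow 2 (int k) = exp (of_nat k * (of_real pi * \<i>))"
    unfolding omega_pow_def by (simp add: mult_ac)
  also have "\<dots> = (-1) ^ k" by (simp only: exp_of_nat_mult exp_pi_i)
  finally show ?thesis .
qed

context ffc begin

definition chi :: "'a \<Rightarrow> complex" where "chi x = omega_pow p (trz p m x)"

lemma chi_tn: "chi x = omega_pow p (int (tn x))" unfolding chi_def trz_tn ..

lemma chi_add: "chi (x + y) = chi x * chi y"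
proof -
  have "(of_nat (tn (x + y)) :: 'a) = of_nat (tn x + tn y)" using tn(2) ftr_add by simp
  then have "tn (x + y) mod p = (tn x + tn y) mod p" by (rule of_nat_eq_mod)
  then have "int (tn (x + y)) mod int p = int (tn x + tn y) mod int p" by (metis zmod_int)
  then have "chi (x + y) = omega_pow p (int (tn x) + int (tn y))"
    unfolding chi_tn using p_gt1 by (intro omega_mod) auto
  then show ?thesis by (simp add: omega_add chi_tn)
qed

lemma tn_zero: "tn 0 = 0"
  using tn[of 0] ftr_zero of_nat_inj[of "tn 0" 0] p_gt1 by simp

lemma chi_zero: "chi 0 = 1" unfolding chi_tn tn_zero by (simp add: omega_zero)

lemma chi_nz: "chi x \<noteq> 0" unfolding chi_def by (rule omega_nz)

lemma chi_neg: "chi (- x) * chi x = 1" using chi_add[of "-x" x] chi_zero by simp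

lemma chi_nontriv: "\<exists>y. chi y \<noteq> 1"
proof -
  obtain y :: 'a where "ftr p m y \<noteq> 0" using ftr_nontriv by blast
  then have "tn y \<noteq> 0" using tn(2)[of y] by (metis of_nat_0)
  then have "chi y \<noteq> 1" unfolding chi_tn using tn(1)[of y] by (intro omega_ne1) auto
  then show ?thesis by blast
qed

lemma chi_sum_zero: assumes "d \<noteq> 0" shows "(\<Sum>x\<in>UNIV. chi (x * d)) = 0"
proof -
  obtain y where y: "chi y \<noteq> 1" using chi_nontriv by blast
  have "(\<Sum>x\<in>UNIV. chi (x * d)) = (\<Sum>x\<in>UNIV. chi ((x + y / d) * d))"
    by (rule sum.reindex_bij_witness[of _ "\<lambda>x. x + y / d" "\<lambda>x. x - y / d"]) auto
  also have "\<dots> = (\<Sum>x\<in>UNIV. chi y * chi (x * d))"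
    using assms by (intro sum.cong) (auto simp: ring_distribs chi_add mult.commute)
  also have "\<dots> = chi y * (\<Sum>x\<in>UNIV. chi (x * d))" by (simp add: sum_distrib_left)
  finally have "(1 - chi y) * (\<Sum>x\<in>UNIV. chi (x * d)) = 0" by (simp add: algebra_simps)
  then show ?thesis using y by simp
qed

lemma chi2: "p = 2 \<Longrightarrow> chi x = (-1) ^ tn x"
  unfolding chi_tn using omega2 by simp

end

lemma sum_one_point: "(\<And>k. k \<noteq> s \<Longrightarrow> f k = 0) \<Longrightarrow> (\<Sum>k\<in>(UNIV::'b::finite set). f k) = f s"
  by (subst sum.remove[of UNIV s]) (auto intro: sum.neutral)

lemma mat_mul_entry: "(mat c ** A) $ r $ s = c * (A $ r $ s :: 'x::semiring_1)"
  unfolding matrix_matrix_mult_def mat_def by (simp, subst sum_one_point[of r]) auto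

lemma mul_mat_entry: "(A ** mat c) $ r $ s = (A $ r $ s :: 'x::comm_semiring_1) * c"
  unfolding matrix_matrix_mult_def mat_def by (simp, subst sum_one_point[of s]) auto

lemma mat_comm: "(A :: 'x::comm_semiring_1^'n^'n) ** mat c = mat c ** A"
  by (simp add: vec_eq_iff mat_mul_entry mul_mat_entry mult.commute)

lemma mat_scal_comm: "(A :: 'x::comm_semiring_1^'n^'n) ** (mat c ** B) = mat c ** (A ** B)"
  by (metis mat_comm matrix_mul_assoc)

lemma mmul_entry: "(A ** B) $ r $ s = (\<Sum>k\<in>UNIV. A $ r $ k * B $ k $ s)"
  unfolding matrix_matrix_mult_def by simp

lemma mat_pull: "(X :: 'x::comm_semiring_1^'n^'n) ** mat c ** Y = mat c ** X ** Y"
  by (simp add: mat_comm)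

lemma mat_mat: "mat c ** mat d = (mat (c * d) :: 'x::comm_semiring_1^'n^'n)"
  by (simp add: vec_eq_iff mat_mul_entry) (simp add: mat_def)

lemma matrix_inv_props:
  assumes "invertible (U :: 'x::semiring_1^'n^'n)"
  shows "U ** matrix_inv U = mat 1" "matrix_inv U ** U = mat 1"
proof -
  have "\<exists>A'. U ** A' = mat 1 \<and> A' ** U = mat 1" using assms unfolding invertible_def .
  then have "U ** matrix_inv U = mat 1 \<and> matrix_inv U ** U = mat 1"
    unfolding matrix_inv_def by (rule someI_ex)
  then show "U ** matrix_inv U = mat 1" "matrix_inv U ** U = mat 1" by auto
qed

lemma invertible_matrix_inv:
  "invertible (U :: 'x::semiring_1^'n^'n) \<Longrightarrow> invertible (matrix_inv U)"
  using matrix_inv_props unfolding invertible_def by blast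

context ffc begin

definition W :: "'a \<Rightarrow> 'a \<Rightarrow> complex^'a::{finite,field}^'a::{finite,field}" where "W a c = Xop a ** Zop p m c"

lemma W_entry: "W a c $ r $ s = (if r = s + a then chi (c * s) else 0)"
proof -
  have "W a c $ r $ s = (\<Sum>k\<in>UNIV. Xop a $ r $ k * Zop p m c $ k $ s)"
    unfolding W_def by (rule mmul_entry)
  also have "\<dots> = Xop a $ r $ s * Zop p m c $ s $ s" by (rule sum_one_point) (simp add: Zop_def)
  finally show ?thesis by (simp add: Xop_def Zop_def chi_def)
qed

definition cj :: "'a \<times> 'a \<Rightarrow> 'a \<times> 'a \<Rightarrow> bool" where
  "cj u v \<longleftrightarrow> (\<exists>U\<in>Jgrp p m b. invertible U \<and>
      (\<exists>c. c \<noteq> 0 \<and> W (fst u) (snd u) ** U = mat c ** (U ** W (fst v) (snd v))))"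

lemma cj_refl: "cj u u"
  unfolding cj_def
  by (intro bexI[of _ "mat 1"] conjI exI[of _ 1]) (auto intro: Jgrp.J_one simp: invertible_def)

lemma cj_trans: "cj u v \<Longrightarrow> cj v w \<Longrightarrow> cj u w"
proof -
  assume "cj u v" "cj v w"
  then obtain U V c d where U: "U \<in> Jgrp p m b" "invertible U" "c \<noteq> 0"
    "W (fst u) (snd u) ** U = mat c ** (U ** W (fst v) (snd v))"
    and V: "V \<in> Jgrp p m b" "invertible V" "d \<noteq> 0"
    "W (fst v) (snd v) ** V = mat d ** (V ** W (fst w) (snd w))"
    unfolding cj_def by blast
  have "W (fst u) (snd u) ** (U ** V) = (W (fst u) (snd u) ** U) ** V" by (simp add: matrix_mul_assoc)
  also have "\<dots> = mat c ** (U ** (W (fst v) (snd v) ** V))" by (simp add: U(4) matrix_mul_assoc mat_comm)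
  also have "\<dots> = mat c ** (U ** (mat d ** (V ** W (fst w) (snd w))))" by (simp add: V(4))
  also have "\<dots> = mat (c * d) ** ((U ** V) ** W (fst w) (snd w))"
    by (simp add: matrix_mul_assoc mat_pull mat_mat)
  finally show "cj u w" unfolding cj_def using U V
    by (intro bexI[of _ "U ** V"] conjI exI[of _ "c * d"]) (auto intro: Jgrp.J_mult invertible_mult)
qed

lemma cj_sym: "cj u v \<Longrightarrow> cj v u"
proof -
  assume "cj u v"
  then obtain U c where U: "U \<in> Jgrp p m b" "invertible U" "c \<noteq> 0"
    "W (fst u) (snd u) ** U = mat c ** (U ** W (fst v) (snd v))"
    unfolding cj_def by blast
  define V where "V = matrix_inv U"
  note I = matrix_inv_props[OF U(2), folded V_def]
  have "V ** W (fst u) (snd u) = V ** (W (fst u) (snd u) ** U) ** V"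
    by (simp add: matrix_mul_assoc[symmetric] I)
  also have "\<dots> = mat c ** (W (fst v) (snd v) ** V)"
    by (simp add: U(4) matrix_mul_assoc mat_pull) (simp add: matrix_mul_assoc[symmetric] I)
  finally have *: "V ** W (fst u) (snd u) = mat c ** (W (fst v) (snd v) ** V)" .
  have "W (fst v) (snd v) ** V = mat (1/c) ** (mat c ** (W (fst v) (snd v) ** V))"
    using U(3) by (simp add: matrix_mul_assoc mat_mat)
  also have "\<dots> = mat (1/c) ** (V ** W (fst u) (snd u))" by (simp add: *)
  finally show "cj v u" unfolding cj_def using U
    by (intro bexI[of _ V] conjI exI[of _ "1/c"])
       (auto simp: V_def intro: Jgrp.J_inv invertible_matrix_inv)
qed

lemma cj_final:
  assumes "cj u v" shows "\<exists>U \<in> Jgrp p m b. \<exists>c :: complex.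
              matrix_inv U ** (Xop (fst u) ** Zop p m (snd u)) ** U = mat c ** (Xop (fst v) ** Zop p m (snd v))"
proof -
  obtain U c where U: "U \<in> Jgrp p m b" "invertible U" "c \<noteq> 0"
    "W (fst u) (snd u) ** U = mat c ** (U ** W (fst v) (snd v))"
    using assms unfolding cj_def by blast
  note I = matrix_inv_props[OF U(2)]
  have "matrix_inv U ** W (fst u) (snd u) ** U = matrix_inv U ** (W (fst u) (snd u) ** U)"
    by (simp add: matrix_mul_assoc)
  also have "\<dots> = mat c ** W (fst v) (snd v)"
    by (simp add: U(4) matrix_mul_assoc mat_pull) (simp add: matrix_mul_assoc[symmetric] I)
  finally show ?thesis using U(1) unfolding W_def by blast
qed

lemma cj_intro:
  assumes "G \<in> Jgrp p m b" "invertible G" "c \<noteq> 0" "\<And>r s. (W a1 b1 ** G) $ r $ s = c * (G ** W a2 b2) $ r $ s"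
  shows "cj (a1, b1) (a2, b2)"
proof -
  have "W a1 b1 ** G = mat c ** (G ** W a2 b2)"
    using assms(4) by (simp add: vec_eq_iff mat_mul_entry)
  then show ?thesis unfolding cj_def using assms by auto
qed

end

lemma mat_entry: "mat c $ r $ s = (if r = s then c else 0)" by (simp add: mat_def)

context ffc begin

lemma Mop_entry: "Mop g $ r $ s = (if r = g * s then 1 else 0)" by (simp add: Mop_def)

lemma Mop_invertible: assumes "g \<noteq> 0" shows "invertible (Mop g)"
proof -
  have "Mop g ** Mop (1/g) = mat 1"
  proof (simp add: vec_eq_iff, intro allI)
    fix r s
    have "(Mop g ** Mop (1/g)) $ r $ s = Mop g $ r $ (s/g) * Mop (1/g) $ (s/g) $ s"
      unfolding mmul_entry using assms by (intro sum_one_point) (auto simp: Mop_entry)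
    also have "\<dots> = mat 1 $ r $ s" using assms by (simp add: Mop_entry mat_entry)
    finally show "(Mop g ** Mop (1/g)) $ r $ s = mat 1 $ r $ s" .
  qed
  then show ?thesis using invertible_right_inverse by blast
qed

lemma cj_M: assumes "g \<noteq> 0" shows "cj (a, c) (a / g, c * g)"
proof (rule cj_intro[OF Jgrp.J_M[OF assms] Mop_invertible[OF assms], of 1])
  fix r s
  have "(W a c ** Mop g) $ r $ s = W a c $ r $ (g * s) * Mop g $ (g * s) $ s"
    unfolding mmul_entry by (rule sum_one_point) (auto simp: Mop_entry)
  moreover have "(Mop g ** W (a / g) (c * g)) $ r $ s = Mop g $ r $ (r / g) * W (a / g) (c * g) $ (r / g) $ s"
    unfolding mmul_entry using assms by (intro sum_one_point) (auto simp: Mop_entry)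
  moreover have "(r = g * s + a) \<longleftrightarrow> (r / g = s + a / g)" using assms by (auto simp: field_simps)
  ultimately show "(W a c ** Mop g) $ r $ s = 1 * (Mop g ** W (a / g) (c * g)) $ r $ s"
    using assms by (simp add: Mop_entry W_entry mult.commute mult.left_commute)
qed simp

definition sq :: complex where "sq = complex_of_real (sqrt (real CARD('a)))"

lemma sq_sq: "sq * sq = of_nat CARD('a)"
  unfolding sq_def by (simp flip: of_real_mult)

lemma sq_nz: "sq \<noteq> 0" unfolding sq_def by simp

lemma Fop_entry: "Fop p m $ r $ s = chi (s * r) / sq"
  unfolding Fop_def chi_def sq_def by simp

lemma Fop_invertible: "invertible (Fop p m :: complex^'a::{finite,field}^'a::{finite,field})"
proof -
  define F' :: "complex^'a::{finite,field}^'a::{finite,field}" where "F' = (\<chi> r s. chi (- (s * r)) / sq)"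
  have "Fop p m ** F' = mat 1"
  proof (simp add: vec_eq_iff, intro allI)
    fix r s :: 'a
    have "(Fop p m ** F') $ r $ s = (\<Sum>k\<in>UNIV. chi (k * (r - s)) / (sq * sq))"
      unfolding mmul_entry
    proof (intro sum.cong refl)
      fix k
      have "chi (k * r) * chi (- (s * k)) = chi (k * (r - s))"
        by (simp add: chi_add[symmetric] algebra_simps)
      then show "Fop p m $ r $ k * F' $ k $ s = chi (k * (r - s)) / (sq * sq)"
        by (simp add: Fop_entry F'_def)
    qed
    also have "\<dots> = mat 1 $ r $ s"
    proof (cases "r = s")
      case True
      then show ?thesis using sq_nz by (simp add: chi_zero sq_sq mat_entry)
    next
      case False
      then show ?thesis using chi_sum_zero[of "r - s"]
        by (simp add: mat_entry sum_divide_distrib[symmetric])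
    qed
    finally show "(Fop p m ** F') $ r $ s = mat 1 $ r $ s" .
  qed
  then show ?thesis using invertible_right_inverse by blast
qed

lemma cj_F: "cj (a, c) (c, - a)"
proof (rule cj_intro[OF Jgrp.J_F Fop_invertible, of "chi (- (a * c))"])
  fix r s
  have "(W a c ** Fop p m) $ r $ s = W a c $ r $ (r - a) * Fop p m $ (r - a) $ s"
    unfolding mmul_entry by (rule sum_one_point) (auto simp: W_entry)
  also have "\<dots> = chi (c * (r - a)) * chi (s * (r - a)) / sq" by (simp add: W_entry Fop_entry)
  also have "chi (c * (r - a)) * chi (s * (r - a)) = chi (- (a * c)) * (chi ((s + c) * r) * chi (- a * s))"
    by (simp add: chi_add[symmetric] algebra_simps)
  also have "(Fop p m ** W c (- a)) $ r $ s = Fop p m $ r $ (s + c) * W c (- a) $ (s + c) $ s"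
    unfolding mmul_entry by (rule sum_one_point) (auto simp: W_entry)
  ultimately show "(W a c ** Fop p m) $ r $ s = chi (- (a * c)) * (Fop p m ** W c (- a)) $ r $ s"
    by (simp add: W_entry Fop_entry)
qed (rule chi_nz)

end

context ffc begin

lemma two_nz: assumes "p \<noteq> 2" shows "(2::'a) \<noteq> 0"
proof
  assume "(2::'a) = 0"
  then have "(of_nat 2 :: 'a) = of_nat 0" by simp
  then have "2 mod p = 0 mod p" by (rule of_nat_eq_mod)
  moreover have "p > 2" using assms p_gt1 by auto
  ultimately show False by simp
qed

definition psi :: "'a \<Rightarrow> 'a \<Rightarrow> complex" where
  "psi g r = omega_pow p (- trz p m (g * r ^ 2 / 2))"

lemma psi_chi: "psi g r * chi (g * r ^ 2 / 2) = 1"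
  unfolding psi_def chi_def by (simp add: omega_add[symmetric] omega_zero)

lemma Pop_odd_entry: "Pop_odd p m g $ r $ s = (if r = s then psi g r else 0)"
  unfolding Pop_odd_def psi_def by simp

lemma Pop_odd_invertible: "invertible (Pop_odd p m g :: complex^'a::{finite,field}^'a::{finite,field})"
proof -
  define Q :: "complex^'a::{finite,field}^'a::{finite,field}" where
    "Q = (\<chi> r s. if r = s then chi (g * r ^ 2 / 2) else 0)"
  have "Pop_odd p m g ** Q = mat 1"
  proof (simp add: vec_eq_iff, intro allI)
    fix r s :: 'a
    have "(Pop_odd p m g ** Q) $ r $ s = Pop_odd p m g $ r $ r * Q $ r $ s"
      unfolding mmul_entry by (intro sum_one_point) (auto simp: Pop_odd_entry)
    also have "\<dots> = mat 1 $ r $ s" using psi_chi by (simp add: Pop_odd_entry Q_def mat_entry)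
    finally show "(Pop_odd p m g ** Q) $ r $ s = mat 1 $ r $ s" .
  qed
  then show ?thesis using invertible_right_inverse by blast
qed

lemma cj_P_odd: assumes "p \<noteq> 2" "g \<noteq> 0" shows "cj (a, c) (a, c + g * a)"
proof -
  have PP: "Pop p m b g = Pop_odd p m g" using assms by (simp add: Pop_def)
  have PJ: "Pop_odd p m g \<in> Jgrp p m b" using Jgrp.J_P[OF assms(2), of p m b] PP by simp
  have two: "(2::'a) \<noteq> 0" by (rule two_nz[OF assms(1)])
  show ?thesis
  proof (rule cj_intro[OF PJ Pop_odd_invertible, of "chi (g * a ^ 2 / 2)"])
    fix r s
    have L: "(W a c ** Pop_odd p m g) $ r $ s = W a c $ r $ s * Pop_odd p m g $ s $ s"
      unfolding mmul_entry by (intro sum_one_point) (auto simp: Pop_odd_entry)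
    have R: "(Pop_odd p m g ** W a (c + g * a)) $ r $ s = Pop_odd p m g $ r $ r * W a (c + g * a) $ r $ s"
      unfolding mmul_entry by (intro sum_one_point) (auto simp: Pop_odd_entry)
    define A where "A = g * s ^ 2 / 2"
    define B where "B = g * (s + a) ^ 2 / 2"
    have "B = A + g * a * s + g * a ^ 2 / 2" unfolding A_def B_def using two
      by (simp add: field_simps power2_eq_square)
    then have hB: "chi B = chi A * chi (g * a * s) * chi (g * a ^ 2 / 2)" by (simp add: chi_add)
    have ps: "psi g s = inverse (chi A)" "psi g (s + a) = inverse (chi B)"
      using psi_chi[of g s] psi_chi[of g "s + a"] unfolding A_def B_def by (auto simp: field_simps chi_nz)
    have key: "chi (c * s) * psi g s = chi (g * a ^ 2 / 2) * (psi g (s + a) * chi ((c + g * a) * s))"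
      unfolding ps hB using chi_nz by (simp add: field_simps chi_add ring_distribs)
    show "(W a c ** Pop_odd p m g) $ r $ s = chi (g * a ^ 2 / 2) * (Pop_odd p m g ** W a (c + g * a)) $ r $ s"
      unfolding L R using key by (simp add: W_entry Pop_odd_entry)
  qed (rule chi_nz)
qed

end

context ffc begin

context
  assumes p2: "p = 2" and sdb: "self_dual_basis p m b"
begin

lemma two0: "(2::'a) = 0" using char_p p2 by simp

lemma ftr01: "ftr p m (x::'a) = 0 \<or> ftr p m x = 1"
proof -
  have "tn x < 2" using tn(1) p2 by simp
  then have "tn x = 0 \<or> tn x = 1" by auto
  then show ?thesis using tn(2)[of x] by auto
qed

lemma neg_eq: "- (x::'a) = x"
proof -
  have "x + x = 2 * x" by simp
  then have "x + x = 0" using two0 by simp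
  then show ?thesis by (simp add: add_eq_0_iff)
qed

lemma sq_inj: "inj (\<lambda>x::'a. x ^ 2)"
proof (rule injI)
  fix x y :: 'a assume "x ^ 2 = y ^ 2"
  have "(x + y) ^ 2 = x ^ 2 + y ^ 2" using frob_add[of x y 1] p2 by simp
  also have "\<dots> = 2 * y ^ 2" using \<open>x ^ 2 = y ^ 2\<close> by simp
  finally have "x + y = 0" using two0 by simp
  then show "x = y" using neg_eq[of y] by (simp add: add_eq_0_iff)
qed

lemma sq_surj: "\<exists>g. g ^ 2 = (y::'a)"
  using finite_UNIV_inj_surj[OF finite_class.finite_UNIV sq_inj] by (metis surjD)

definition sb :: "'a \<Rightarrow> nat set" where "sb s = {j. j < m \<and> ftr p m (s * b j) \<noteq> 0}"

lemma sb_sub: "sb s \<subseteq> {..<m}" unfolding sb_def by auto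

lemma wgt_sb: "wgt p m b s = card (sb s)" unfolding wgt_def sb_def ..

lemma sb_add: "sb ((s::'a) + a) = (sb s - sb a) \<union> (sb a - sb s)"
proof -
  have "ftr p m ((s + a) * b j) \<noteq> 0 \<longleftrightarrow> (ftr p m (s * b j) \<noteq> 0) \<noteq> (ftr p m (a * b j) \<noteq> 0)" for j
    using ftr01[of "s * b j"] ftr01[of "a * b j"] two0
    by (auto simp: ring_distribs ftr_add)
  then show ?thesis unfolding sb_def by auto
qed

lemma ftr_basis_sum: assumes "S \<subseteq> {..<m}" "i < m"
  shows "ftr p m ((\<Sum>j\<in>S. b j) * b i) = (if i \<in> S then 1 else 0)"
proof -
  have fin: "finite S" using assms(1) finite_subset by blast
  have "ftr p m ((\<Sum>j\<in>S. b j) * b i) = (\<Sum>j\<in>S. ftr p m (b j * b i))"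
    by (simp add: sum_distrib_right ftr_sum[OF fin])
  also have "\<dots> = (\<Sum>j\<in>S. if j = i then 1 else 0)"
    using sdb assms unfolding self_dual_basis_def by (intro sum.cong) auto
  also have "\<dots> = (if i \<in> S then 1 else 0)" using fin by (simp add: sum.delta)
  finally show ?thesis .
qed

lemma sb_basis_sum: assumes "S \<subseteq> {..<m}" shows "sb (\<Sum>j\<in>S. b j) = S"
proof -
  have "j < m \<and> ftr p m ((\<Sum>j\<in>S. b j) * b j) \<noteq> 0 \<longleftrightarrow> j \<in> S" for j
    using ftr_basis_sum[OF assms, of j] assms by (auto split: if_splits)
  then show ?thesis unfolding sb_def by auto
qed

lemma basis_rep: "(y::'a) = (\<Sum>j\<in>sb y. b j)"
proof -
  define f where "f S = (\<Sum>j\<in>S. b j)" for S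
  have inj: "inj_on f (Pow {..<m})"
    by (rule inj_on_inverseI[of _ sb]) (auto simp: f_def sb_basis_sum)
  have "card (f ` Pow {..<m}) = 2 ^ m" using card_image[OF inj] by (simp add: card_Pow)
  then have "f ` Pow {..<m} = UNIV" using card_a p2 by (intro card_subset_eq) auto
  then obtain S where S: "S \<subseteq> {..<m}" "y = f S" by blast
  then show ?thesis using sb_basis_sum[OF S(1)] by (simp add: f_def)
qed

lemma ftr_prod: "ftr p m ((a::'a) * s) = of_nat (card (sb a \<inter> sb s))"
proof -
  have fin: "finite (sb a)" using sb_sub finite_subset by blast
  have "ftr p m (a * s) = ftr p m ((\<Sum>j\<in>sb a. b j) * s)" by (subst basis_rep[of a]) simp
  also have "\<dots> = (\<Sum>j\<in>sb a. ftr p m (s * b j))"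
    by (simp add: sum_distrib_right ftr_sum[OF fin]) (simp add: mult.commute)
  also have "\<dots> = (\<Sum>j\<in>sb a. if j \<in> sb s then 1 else 0)"
  proof (intro sum.cong refl)
    fix j assume "j \<in> sb a"
    then have "j < m" using sb_sub by auto
    then show "ftr p m (s * b j) = (if j \<in> sb s then 1 else 0)"
      using ftr01[of "s * b j"] unfolding sb_def by auto
  qed
  also have "\<dots> = of_nat (card (sb a \<inter> sb s))"
    using fin by (simp add: sum.If_cases Int_def)
  finally show ?thesis .
qed

lemma chi_prod: "chi ((a::'a) * s) = (-1) ^ card (sb a \<inter> sb s)"
proof -
  have "(of_nat (tn (a * s)) :: 'a) = of_nat (card (sb a \<inter> sb s))" using tn(2) ftr_prod by simp
  then have "tn (a * s) mod 2 = card (sb a \<inter> sb s) mod 2" using of_nat_eq_mod p2 by blast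
  then have "even (tn (a * s)) = even (card (sb a \<inter> sb s))" by (simp add: even_iff_mod_2_eq_zero)
  then show ?thesis using chi2[OF p2] by (simp add: minus_one_power_iff)
qed

lemma phase_identity:
  fixes S A :: "nat set" assumes "finite S" "finite A"
  shows "(- \<i>) ^ card S = \<i> ^ card A * ((- \<i>) ^ card ((S - A) \<union> (A - S)) * (-1) ^ card (A \<inter> S))"
proof -
  define x where "x = card (S - A)"
  define y where "y = card (A - S)"
  define k where "k = card (A \<inter> S)"
  have cS: "card S = x + k" unfolding x_def k_def
    using card_Int_Diff[OF assms(1), of A] by (simp add: Int_commute)
  have cA: "card A = y + k" unfolding y_def k_def
    using card_Int_Diff[OF assms(2), of S] by simp
  have cD: "card ((S - A) \<union> (A - S)) = x + y" unfolding x_def y_def using assms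
    by (subst card_Un_disjoint) auto
  have iy: "\<i> ^ y * (- \<i>) ^ y = 1" by (simp flip: power_mult_distrib)
  have ik: "\<i> ^ k * (-1) ^ k = (- \<i>) ^ k" by (simp flip: power_mult_distrib)
  have "\<i> ^ (y + k) * ((- \<i>) ^ (x + y) * (-1) ^ k) = (- \<i>) ^ x * (\<i> ^ y * (- \<i>) ^ y) * (\<i> ^ k * (-1) ^ k)"
    by (simp only: power_add mult_ac)
  also have "\<dots> = (- \<i>) ^ (x + k)" by (simp only: iy ik mult_1_right power_add)
  finally show ?thesis unfolding cS cA cD k_def[symmetric] by simp
qed

lemma P1_entry: "P1_even p m b $ r $ s = (if r = s then (- \<i>) ^ card (sb r) else 0)"
  unfolding P1_even_def wgt_sb by simp

lemma P1_invertible: "invertible (P1_even p m b :: complex^'a::{finite,field}^'a::{finite,field})"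
proof -
  define Q :: "complex^'a::{finite,field}^'a::{finite,field}" where
    "Q = (\<chi> r s. if r = s then \<i> ^ card (sb r) else 0)"
  have "P1_even p m b ** Q = mat 1"
  proof (simp add: vec_eq_iff, intro allI)
    fix r s :: 'a
    have "(P1_even p m b ** Q) $ r $ s = P1_even p m b $ r $ r * Q $ r $ s"
      unfolding mmul_entry by (intro sum_one_point) (auto simp: P1_entry)
    also have "\<dots> = mat 1 $ r $ s" by (simp add: P1_entry Q_def mat_entry flip: power_mult_distrib)
    finally show "(P1_even p m b ** Q) $ r $ s = mat 1 $ r $ s" .
  qed
  then show ?thesis using invertible_right_inverse by blast
qed

lemma P1_in_J: "P1_even p m b \<in> Jgrp p m b"
proof -
  have g: "(SOME g::'a. g ^ 2 = 1) = 1"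
  proof (rule some_equality)
    fix g :: 'a assume "g ^ 2 = 1" then show "g = 1" using sq_inj by (metis injD power_one)
  qed simp
  have M1: "Mop (1::'a) = mat 1" by (simp add: vec_eq_iff Mop_entry mat_entry)
  have inv1: "invertible (mat 1 :: complex^'a::{finite,field}^'a::{finite,field})"
    unfolding invertible_def by (intro exI[of _ "mat 1"]) simp
  have "matrix_inv (mat 1 :: complex^'a::{finite,field}^'a::{finite,field}) = mat 1"
    using matrix_inv_props(1)[OF inv1] by simp
  then have "Pop p m b 1 = P1_even p m b" using p2
    by (simp add: Pop_def Pop_even_def g M1 Let_def)
  then show ?thesis using Jgrp.J_P[of 1 p m b] by simp
qed

lemma cj_P1: "cj ((a::'a), c) (a, c + a)"
proof (rule cj_intro[OF P1_in_J P1_invertible, of "\<i> ^ card (sb a)"])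
  fix r s
  have L: "(W a c ** P1_even p m b) $ r $ s = W a c $ r $ s * P1_even p m b $ s $ s"
    unfolding mmul_entry by (intro sum_one_point) (auto simp: P1_entry)
  have R: "(P1_even p m b ** W a (c + a)) $ r $ s = P1_even p m b $ r $ r * W a (c + a) $ r $ s"
    unfolding mmul_entry by (intro sum_one_point) (auto simp: P1_entry)
  have fin: "finite (sb s)" "finite (sb a)" using sb_sub finite_subset by blast+
  have key: "(- \<i>) ^ card (sb s) = \<i> ^ card (sb a) * ((- \<i>) ^ card (sb (s + a)) * chi (a * s))"
    unfolding chi_prod sb_add by (rule phase_identity[OF fin])
  show "(W a c ** P1_even p m b) $ r $ s = \<i> ^ card (sb a) * (P1_even p m b ** W a (c + a)) $ r $ s"
    unfolding L R using key by (simp add: W_entry P1_entry ring_distribs chi_add mult_ac)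
qed (simp)

end
end

context ffc begin

lemma cj_eq: "cj u v \<Longrightarrow> v = v' \<Longrightarrow> cj u v'" by simp

lemma cj_nz_base:
  assumes "p = 2 \<Longrightarrow> self_dual_basis p m b" and "a \<noteq> 0"
  shows "cj (a, c) (1, 0)"
proof (cases "p = 2")
  case False
  have M: "cj (a, 0) (1, 0)" using cj_M[OF assms(2), of a 0] assms(2) by simp
  show ?thesis
  proof (cases "c = 0")
    case True then show ?thesis using M by simp
  next
    case c: False
    have "- c / a \<noteq> 0" using c assms(2) by simp
    from cj_P_odd[OF False this, of a c] have "cj (a, c) (a, 0)"
      using assms(2) by (simp add: field_simps)
    then show ?thesis using M cj_trans by blast
  qed
next
  case True
  note sdb = assms(1)[OF True]
  have M: "cj (a, c) (1, c * a)" using cj_M[OF assms(2), of a c] assms(2) by simp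
  define t where "t = c * a"
  show ?thesis
  proof (cases "t = 0")
    case True then have "c * a = 0" using t_def by simp
    then show ?thesis using M by metis
  next
    case tnz: False
    obtain g where g: "g ^ 2 = 1 / t" using sq_surj[OF True sdb] by blast
    have gnz: "g \<noteq> 0" using g tnz by auto
    have 1: "cj (1, t) (1 / g, t * g)" using cj_M[OF gnz, of 1 t] by simp
    have 2: "cj (1 / g, t * g) (1 / g, t * g + 1 / g)" by (rule cj_P1[OF True sdb])
    have inz: "1 / g \<noteq> 0" using gnz by simp
    have 3: "cj (1 / g, t * g + 1 / g) (1, 0)"
    proof (rule cj_eq[OF cj_M[OF inz]])
      have "(t * g + 1 / g) * (1 / g) = t + 1 / g ^ 2" using gnz by (simp add: field_simps power2_eq_square)
      also have "\<dots> = t + t" using g tnz by simp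
      also have "\<dots> = 0" using two0[OF True sdb] by (metis mult_2 mult_zero_left)
      finally show "(1 / g / (1 / g), (t * g + 1 / g) * (1 / g)) = (1, 0)" using gnz by simp
    qed
    show ?thesis using M 1 2 3 cj_trans t_def by metis
  qed
qed

lemma cj_base:
  assumes "p = 2 \<Longrightarrow> self_dual_basis p m b" and "(a, c) \<noteq> (0, 0)"
  shows "cj (a, c) (1, 0)"
proof (cases "a = 0")
  case True
  then have "c \<noteq> 0" using assms(2) by simp
  have "cj (a, c) (c, 0)" using cj_F[of a c] True by simp
  then show ?thesis using cj_nz_base[OF assms(1) \<open>c \<noteq> 0\<close>] cj_trans by blast
next
  case False then show ?thesis using cj_nz_base[OF assms(1)] by blast
qed

end

theorem corollary1:
  fixes p m :: nat and b :: "nat \<Rightarrow> 'a::{finite,field}"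
  assumes "prime p" and "CARD('a) = p ^ m" and "of_nat p = (0::'a)"
    and "p = 2 \<Longrightarrow> self_dual_basis p m b"
  shows "\<forall>\<alpha> \<beta> \<alpha>' \<beta>' :: 'a. (\<alpha>, \<beta>) \<noteq> (0, 0) \<longrightarrow> (\<alpha>', \<beta>') \<noteq> (0, 0) \<longrightarrow>
           (\<exists>U \<in> Jgrp p m b. \<exists>c :: complex.
              matrix_inv U ** (Xop \<alpha> ** Zop p m \<beta>) ** U = mat c ** (Xop \<alpha>' ** Zop p m \<beta>'))"
proof (intro allI impI)
  interpret ffc p m b using assms(1-3) by unfold_locales
  fix \<alpha> \<beta> \<alpha>' \<beta>' :: 'a
  assume "(\<alpha>, \<beta>) \<noteq> (0, 0)" "(\<alpha>', \<beta>') \<noteq> (0, 0)"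
  then have "cj (\<alpha>, \<beta>) (1, 0)" "cj (\<alpha>', \<beta>') (1, 0)" using cj_base[OF assms(4)] by auto
  then have "cj (\<alpha>, \<beta>) (\<alpha>', \<beta>')" using cj_sym cj_trans by blast
  from cj_final[OF this] show "\<exists>U \<in> Jgrp p m b. \<exists>c :: complex.
              matrix_inv U ** (Xop \<alpha> ** Zop p m \<beta>) ** U = mat c ** (Xop \<alpha>' ** Zop p m \<beta>')" by simp
qed

end
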